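(* Let $k\ge1$, let $r\in\mathbb{Z}_k^*$ (represented by an integer $1\le r<k$ when used as an exponent), let $\varphi:\mathbb{Z}_k\to\mathbb{Z}_k$, $x\mapsto xr$, be the corresponding automorphism of the additive group $\mathbb{Z}_k$, let $m$ be the multiplicative order of $r$ in $\mathbb{Z}_k$, and let $n$ be a positive multiple of $m$. Then the extended power functions $\Pi:\mathbb{Z}_k\to\mathbb{Z}_n$ of $\varphi$ are exactly the functions \[ \Pi_{r,s,t}(x)\equiv1+ms\sum_{i=1}^{x}t^{i-1}\pmod n,\qquad x\in\mathbb{Z}_k\ (\text{represented by } 0\le x<k), \] where $s\in\mathbb{Z}_{n/m}$ and $t\in\mathbb{Z}_{n/m}^*$ satisfy: (a) $t^{r-1}\equiv1\pmod{n/m}$; (b) $s\sum_{i=1}^{k}t^{i-1}\equiv0\pmod{n/m}$; (c) $s\sum_{i=1}^{m}\big(\sum_{j=1}^{r}t^{j-1}\big)^{i-1}\equiv t-1\pmod{n/m}$. Moreover, for fixed $r$, $\Pi_{r,s,t}=\Pi_{r,s',t'}$ if and only if $s\equiv s'\pmod{n/m}$ and $s(t-t')\equiv0\pmod{n/m}$.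
   Context: A skew-morphism of a finite group $A$ is a permutation $\varphi$ of $A$ fixing the identity for which there is $\pi:A\to\mathbb{Z}_m$ ($m$ the order of $\varphi$) with $\varphi(xy)=\varphi(x)\varphi^{\pi(x)}(y)$; for an automorphism, $\pi\equiv1\pmod m$. For a positive multiple $n$ of $m$, $\Pi:A\to\mathbb{Z}_n$ is an extended power function of $\varphi$ if (i) $\Pi(x)\equiv\pi(x)\pmod m$ for all $x$; (ii) $\Pi$ of the identity is $\equiv1\pmod n$; (iii) $\Pi(xy)\equiv\sum_{i=1}^{\Pi(x)}\Pi(\varphi^{i-1}(y))\pmod n$ for all $x,y\in A$ (here $A=\mathbb{Z}_k$ is written additively, so $xy$ means $x+y$). *)

theory Defs
  imports "HOL-Number_Theory.Number_Theory"
begin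

text \<open>Elements of Z_k are represented by naturals 0..<k, elements of Z_n by naturals 0..<n.
  A skew-morphism phi of Z_k (additively written) with power function pi (values taken mod m,
  m = order of phi).\<close>

definition ext_power_fun ::
  "nat \<Rightarrow> (nat \<Rightarrow> nat) \<Rightarrow> (nat \<Rightarrow> nat) \<Rightarrow> nat \<Rightarrow> nat \<Rightarrow> (nat \<Rightarrow> nat) \<Rightarrow> bool" where
  "ext_power_fun k phi pw m n PP \<longleftrightarrow>
     (\<forall>x<k. PP x < n) \<and>
     (\<forall>x<k. [PP x = pw x] (mod m)) \<and>
     [PP 0 = 1] (mod n) \<and>
     (\<forall>x<k. \<forall>y<k. [PP ((x + y) mod k) = (\<Sum>i=1..PP x. PP ((phi ^^ (i - 1)) y))] (mod n))"

definition Pi_rst :: "nat \<Rightarrow> nat \<Rightarrow> nat \<Rightarrow> int \<Rightarrow> int \<Rightarrow> nat \<Rightarrow> nat" where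
  "Pi_rst k r n s t x =
     nat ((1 + int (ord k r) * s * (\<Sum>i=1..x. t ^ (i - 1))) mod int n)"

definition admissible_st :: "nat \<Rightarrow> nat \<Rightarrow> nat \<Rightarrow> int \<Rightarrow> int \<Rightarrow> bool" where
  "admissible_st k r n s t \<longleftrightarrow>
     (let m = ord k r; d = int (n div m) in
       0 \<le> s \<and> s < d \<and> 0 \<le> t \<and> t < d \<and> coprime t d \<and>
       [t ^ (r - 1) = 1] (mod d) \<and>
       [s * (\<Sum>i=1..k. t ^ (i - 1)) = 0] (mod d) \<and>
       [s * (\<Sum>i=1..m. (\<Sum>j=1..r. t ^ (j - 1)) ^ (i - 1)) = t - 1] (mod d))"

end

theory Submission
  imports Defs
begin


definition gs :: "int \<Rightarrow> nat \<Rightarrow> int" where "gs t a = (\<Sum>i<a. t ^ i)"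

lemma gs_0[simp]: "gs t 0 = 0" by (simp add: gs_def)
lemma gs_Suc: "gs t (Suc a) = 1 + t * gs t a"
  unfolding gs_def by (subst sum.lessThan_Suc_shift) (simp add: sum_distrib_left)
lemma gs_add: "gs t (a + b) = gs t a + t ^ a * gs t b"
  by (induction b) (simp_all add: gs_def algebra_simps power_add)
lemma gs_mult: "gs t (a * b) = gs t a * gs (t ^ a) b"
proof (induction b)
  case 0 then show ?case by simp
next
  case (Suc b)
  have "gs t (a * Suc b) = gs t (a * b + a)" by (simp add: algebra_simps)
  also have "\<dots> = gs t (a*b) + t^(a*b) * gs t a" by (rule gs_add)
  also have "\<dots> = gs t a * gs (t ^ a) (Suc b)"
    using Suc by (simp add: gs_def algebra_simps power_mult sum_distrib_left)
  finally show ?case .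
qed
lemma gs_geom: "(t - 1) * gs t a = t ^ a - 1"
  by (induction a) (simp_all add: gs_Suc algebra_simps)
lemma gs_alt: "(\<Sum>i=1..x. t ^ (i - 1)) = gs t x"
  unfolding gs_def using sum_bounds_lt_plus1[of "\<lambda>i. t ^ (i - 1)" x] by simp

lemma gs_cong: "[u = v] (mod d) \<Longrightarrow> [gs u a = gs v a] (mod d)"
  unfolding gs_def by (intro cong_sum cong_pow) auto

lemma gs_mod_k:
  assumes "[s * gs t k = 0] (mod d)"
  shows "[s * gs t (a mod k) = s * gs t a] (mod d)"
proof -
  have "gs t a = gs t (a mod k) + t ^ (a mod k) * (gs t k * gs (t^k) (a div k))"
    using gs_add[of t "a mod k" "k * (a div k)"] gs_mult[of t k "a div k"] by simp
  hence "s * gs t a = s * gs t (a mod k) + t ^ (a mod k) * gs (t^k) (a div k) * (s * gs t k)"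
    by (simp add: algebra_simps)
  moreover have "[t ^ (a mod k) * gs (t^k) (a div k) * (s * gs t k) = 0] (mod d)"
    using cong_mult[OF cong_refl assms] by simp
  ultimately show ?thesis
    by (metis add.right_neutral cong_add cong_refl cong_sym)
qed

lemma pow_r_pow:
  assumes "[t ^ r = t] (mod d)"
  shows "[t ^ (r ^ i) = t] (mod d)"
proof (induction i)
  case 0 then show ?case by simp
next
  case (Suc i)
  have "t ^ (r ^ Suc i) = (t ^ (r ^ i)) ^ r" by (simp add: power_mult[symmetric] mult.commute)
  moreover have "[(t ^ (r ^ i)) ^ r = t ^ r] (mod d)" using Suc by (rule cong_pow)
  ultimately show ?case using assms cong_trans by metis
qed

lemma gs_r_pow:
  assumes "[t ^ r = t] (mod d)"
  shows "[gs t (r ^ i * y) = gs t (r ^ i) * gs t y] (mod d)"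
  unfolding gs_mult by (intro cong_mult cong_refl gs_cong pow_r_pow assms)

lemma gs_r_pow2:
  assumes "[t ^ r = t] (mod d)"
  shows "[gs t (r ^ i) = (gs t r) ^ i] (mod d)"
proof (induction i)
  case 0 then show ?case by (simp add: gs_def)
next
  case (Suc i)
  have "[gs t (r ^ i * r) = gs t (r ^ i) * gs t r] (mod d)" by (rule gs_r_pow[OF assms])
  moreover have "[gs t (r ^ i) * gs t r = gs t r ^ i * gs t r] (mod d)"
    using Suc by (intro cong_mult cong_refl)
  ultimately show ?case by (metis cong_trans power_Suc2 mult.commute)
qed



lemma phi_pow:
  fixes y k r :: nat
  assumes "y < k"
  shows "((\<lambda>x. x * r mod k) ^^ i) y = y * r ^ i mod k"
proof (induction i)
  case 0 then show ?case using assms by (simp add: mod_less)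
next
  case (Suc i)
  then show ?case by (simp add: mod_mult_left_eq mult.assoc mult.commute[of r])
qed

lemma sum_split_add: "(\<Sum>i<(a::nat)+b. f i) = (\<Sum>i<a. f i) + (\<Sum>i<b. f (a + i))"
  by (induction b) (simp_all add: algebra_simps)

lemma periodic_shift:
  fixes m q i :: nat
  assumes "\<And>i. f (i + m) = (f i :: int)"
  shows "f (m * q + i) = f i"
proof (induction q)
  case 0 then show ?case by simp
next
  case (Suc q)
  have "f (m * Suc q + i) = f ((m * q + i) + m)" by (simp add: algebra_simps)
  then show ?case using assms Suc by simp
qed

lemma sum_period:
  fixes f :: "nat \<Rightarrow> int"
  assumes "\<And>i. f (i + m) = f i"
  shows "(\<Sum>i<m*q. f i) = int q * (\<Sum>i<m. f i)"
proof (induction q)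
  case 0 then show ?case by simp
next
  case (Suc q)
  have eq: "m * Suc q = m*q + m" by simp
  have "(\<Sum>i<m * Suc q. f i) = (\<Sum>i<m*q. f i) + (\<Sum>i<m. f (m*q + i))"
    by (simp only: eq sum_split_add)
  also have "(\<Sum>i<m. f (m*q + i)) = (\<Sum>i<m. f i)"
    using periodic_shift[where f=f and m=m, OF assms] by simp
  finally show ?case using Suc by (simp add: algebra_simps)
qed

lemma sum_N:
  fixes f :: "nat \<Rightarrow> int" and \<sigma> :: int
  assumes "m > 0" "\<And>i. f (i + m) = f i" "int N = 1 + int m * \<sigma>"
  shows "(\<Sum>i<N. f i) = f 0 + \<sigma> * (\<Sum>i<m. f i)"
proof (cases "N = 0")
  case True
  then have "int m * \<sigma> = -1" using assms(3) by simp
  then have "int m = 1 \<and> \<sigma> = -1"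
  proof -
    have "int m * (- \<sigma>) = 1" using \<open>int m * \<sigma> = -1\<close> by simp
    then show ?thesis unfolding zmult_eq_1_iff by auto
  qed
  then have "m = 1" by simp
  then show ?thesis using True \<open>int m = 1 \<and> \<sigma> = -1\<close> by simp
next
  case False
  then have "int m * \<sigma> \<ge> 0" using assms(3) by simp
  then have "\<sigma> \<ge> 0" using assms(1) by (simp add: zero_le_mult_iff)
  then obtain q where q: "\<sigma> = int q" by (metis nonneg_int_cases)
  then have N: "N = Suc (m * q)" using assms(3) by (simp flip: of_nat_mult of_nat_Suc)
  have "(\<Sum>i<N. f i) = (\<Sum>i<m*q. f i) + f (m * q)" by (simp add: N)
  also have "f (m * q) = f 0" using periodic_shift[where f=f and m=m and q=q and i=0, OF assms(2)] by simp
  finally show ?thesis using sum_period[where f=f and m=m and q=q, OF assms(2)] q by (simp add: algebra_simps)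
qed

lemma cong_nat_int_pm:
  fixes m d :: nat and A B :: int
  assumes "m > 0" "int a = 1 + int m * A" "int b = 1 + int m * B"
  shows "[a = b] (mod (m * d)) \<longleftrightarrow> [A = B] (mod int d)"
proof -
  have "[a = b] (mod (m * d)) \<longleftrightarrow> [int a = int b] (mod int (m * d))" using cong_int_iff[of a b "m*d"] by simp
  also have "\<dots> \<longleftrightarrow> int m * int d dvd int m * (A - B)"
    by (simp add: cong_iff_dvd_diff assms(2,3) algebra_simps)
  also have "\<dots> \<longleftrightarrow> int d dvd (A - B)" using assms(1) by simp
  also have "\<dots> \<longleftrightarrow> [A = B] (mod int d)" by (simp add: cong_iff_dvd_diff)
  finally show ?thesis .
qed

lemma key:
  fixes P :: "nat \<Rightarrow> nat" and k r m d x y :: nat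
  assumes "k > 0" "m > 0" "[r ^ m = 1] (mod k)" and Pm: "\<And>z. z < k \<Longrightarrow> [P z = 1] (mod m)"
    and "x < k" "y < k"
  defines "\<sigma> \<equiv> \<lambda>z. (int (P z) - 1) div int m"
  shows "[P ((x + y) mod k) = (\<Sum>i=1..P x. P (((\<lambda>x. x * r mod k) ^^ (i - 1)) y))] (mod (m * d))
     \<longleftrightarrow> [\<sigma> ((x + y) mod k) = \<sigma> y + \<sigma> x * (1 + (\<Sum>i<m. \<sigma> (y * r ^ i mod k)))] (mod int d)"
proof -
  have Pz: "int (P z) = 1 + int m * \<sigma> z" if "z < k" for z
  proof -
    have "[int (P z) = 1] (mod int m)" using Pm[OF that] by (metis cong_int_iff of_nat_1)
    then have "int m dvd int (P z) - 1" by (simp add: cong_iff_dvd_diff)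
    then show ?thesis unfolding \<sigma>_def by simp
  qed
  define f where "f i = int (P (y * r ^ i mod k))" for i
  have per: "f (i + m) = f i" for i
  proof -
    have "[y * r ^ i * r ^ m = y * r ^ i * 1] (mod k)" by (rule cong_mult[OF cong_refl assms(3)])
    then have "y * r ^ (i + m) mod k = y * r ^ i mod k" by (simp add: cong_def power_add mult.assoc)
    then show ?thesis by (simp add: f_def)
  qed
  have sumeq: "int (\<Sum>i=1..P x. P (((\<lambda>x. x * r mod k) ^^ (i - 1)) y)) = (\<Sum>i<P x. f i)"
  proof -
    have "(\<Sum>i=1..P x. P (((\<lambda>x. x * r mod k) ^^ (i - 1)) y)) = (\<Sum>i<P x. P (((\<lambda>x. x * r mod k) ^^ i) y))"
      using sum_bounds_lt_plus1[of "\<lambda>i. P (((\<lambda>x. x * r mod k) ^^ (i - 1)) y)" "P x"] by simp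
    then show ?thesis by (simp add: f_def phi_pow[OF assms(6)])
  qed
  have fm: "(\<Sum>i<m. f i) = int m * (1 + (\<Sum>i<m. \<sigma> (y * r ^ i mod k)))"
  proof -
    have "(\<Sum>i<m. f i) = (\<Sum>i<m. 1 + int m * \<sigma> (y * r ^ i mod k))"
      unfolding f_def using Pz assms(1) by (intro sum.cong) auto
    also have "\<dots> = int m * (1 + (\<Sum>i<m. \<sigma> (y * r ^ i mod k)))"
      by (simp add: sum.distrib sum_distrib_left algebra_simps)
    finally show ?thesis .
  qed
  have f0: "f 0 = 1 + int m * \<sigma> y" using Pz[OF assms(6)] assms(6) by (simp add: f_def)
  have "int (\<Sum>i=1..P x. P (((\<lambda>x. x * r mod k) ^^ (i - 1)) y))
        = 1 + int m * (\<sigma> y + \<sigma> x * (1 + (\<Sum>i<m. \<sigma> (y * r ^ i mod k))))"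
    unfolding sumeq sum_N[where f=f and m=m, OF assms(2) per Pz[OF assms(5)]] f0 fm by (simp add: algebra_simps)
  moreover have "int (P ((x + y) mod k)) = 1 + int m * \<sigma> ((x + y) mod k)"
    using Pz assms(1) by simp
  ultimately show ?thesis using cong_nat_int_pm[OF assms(2)] by blast
qed



lemma Pz_lemma:
  fixes P m :: nat
  assumes "[P = 1] (mod m)"
  shows "int P = 1 + int m * ((int P - 1) div int m)"
proof -
  have "[int P = 1] (mod int m)" using assms by (metis cong_int_iff of_nat_1)
  then have "int m dvd int P - 1" by (simp add: cong_iff_dvd_diff)
  then show ?thesis by simp
qed

lemma Pi_form:
  fixes m d n :: nat and B :: int
  assumes "m > 0" "n = m * d" "n > 0"
  shows "int (nat ((1 + int m * B) mod int n)) = 1 + int m * (B - int d * ((1 + int m * B) div int n))"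
proof -
  have "(1 + int m * B) mod int n \<ge> 0" using assms by simp
  then have "int (nat ((1 + int m * B) mod int n)) = (1 + int m * B) mod int n" by simp
  also have "\<dots> = 1 + int m * B - int n * ((1 + int m * B) div int n)"
    by (simp add: minus_div_mult_eq_mod[symmetric] algebra_simps)
  finally show ?thesis using assms(2) by (simp add: algebra_simps)
qed

lemma div_exact_cong:
  fixes m d :: nat and A B :: int
  assumes "m > 0" "X = 1 + int m * A" "[A = B] (mod int d)"
  shows "[(X - 1) div int m = B] (mod int d)"
  using assms by simp

lemma Pi_sigma:
  fixes m d n :: nat and B :: int
  assumes "m > 0" "n = m * d" "n > 0"
  defines "P \<equiv> nat ((1 + int m * B) mod int n)"
  shows "int P = 1 + int m * ((int P - 1) div int m)" "[(int P - 1) div int m = B] (mod int d)"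
    "[P = 1] (mod m)"
proof -
  let ?A = "B - int d * ((1 + int m * B) div int n)"
  have e: "int P = 1 + int m * ?A" unfolding P_def by (rule Pi_form[OF assms(1-3)])
  have c: "[?A = B] (mod int d)" by (simp add: cong_iff_dvd_diff)
  show "int P = 1 + int m * ((int P - 1) div int m)" using e assms(1) by simp
  show "[(int P - 1) div int m = B] (mod int d)" using e c assms(1) by simp
  have "[int P = 1] (mod int m)" using e by (simp add: cong_iff_dvd_diff)
  then show "[P = 1] (mod m)" by (metis cong_int_iff of_nat_1)
qed

lemma Pi_eq_iff:
  fixes m d n :: nat and B B' :: int
  assumes "m > 0" "n = m * d" "n > 0"
  shows "nat ((1 + int m * B) mod int n) = nat ((1 + int m * B') mod int n) \<longleftrightarrow> [B = B'] (mod int d)"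
proof -
  have "nat ((1 + int m * B) mod int n) = nat ((1 + int m * B') mod int n) \<longleftrightarrow>
        (1 + int m * B) mod int n = (1 + int m * B') mod int n"
    using assms by (simp add: nat_eq_iff)
  also have "\<dots> \<longleftrightarrow> int m * int d dvd int m * (B - B')"
    using assms by (simp add: cong_def[symmetric] cong_iff_dvd_diff algebra_simps)
  also have "\<dots> \<longleftrightarrow> [B = B'] (mod int d)" using assms by (simp add: cong_iff_dvd_diff)
  finally show ?thesis .
qed



lemma P_as_Pi:
  fixes m d n P :: nat and A B :: int
  assumes "m > 0" "n = m * d" "n > 0" "int P = 1 + int m * A" "P < n" "[A = B] (mod int d)"
  shows "P = nat ((1 + int m * B) mod int n)"
proof -
  have "P = nat ((1 + int m * A) mod int n)"
    using assms(4,5) by (metis mod_pos_pos_trivial nat_int of_nat_0_le_iff of_nat_less_iff)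
  also have "\<dots> = nat ((1 + int m * B) mod int n)" using Pi_eq_iff[OF assms(1-3)] assms(6) by blast
  finally show ?thesis .
qed

lemma conds_transfer:
  fixes s t s' t' d :: int
  assumes "[s = s'] (mod d)" "[t = t'] (mod d)"
    "coprime t d" "[t ^ (r - 1) = 1] (mod d)" "[s * gs t k = 0] (mod d)"
    "[s * gs (gs t r) m = t - 1] (mod d)"
  shows "coprime t' d" "[t' ^ (r - 1) = 1] (mod d)" "[s' * gs t' k = 0] (mod d)"
    "[s' * gs (gs t' r) m = t' - 1] (mod d)"
proof -
  show "coprime t' d" using cong_imp_coprime[OF assms(2) assms(3)] .
  show "[t' ^ (r - 1) = 1] (mod d)"
    using cong_pow[OF assms(2), of "r - 1"] assms(4) by (meson cong_sym cong_trans)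
  have "[s * gs t k = s' * gs t' k] (mod d)" by (intro cong_mult gs_cong assms(1,2))
  then show "[s' * gs t' k = 0] (mod d)" using assms(5) by (meson cong_sym cong_trans)
  have "[s * gs (gs t r) m = s' * gs (gs t' r) m] (mod d)" by (intro cong_mult gs_cong assms(1,2))
  moreover have "[t - 1 = t' - 1] (mod d)" by (intro cong_diff assms(2) cong_refl)
  ultimately show "[s' * gs (gs t' r) m = t' - 1] (mod d)" using assms(6) by (meson cong_sym cong_trans)
qed

context
  fixes k r n m d :: nat
  assumes k1: "k \<ge> 1" and r1: "1 \<le> r" and rk: "r < k \<or> r = 1" and cop: "coprime r k"
    and n0: "n > 0" and mdef: "m = ord k r" and mdvd: "m dvd n" and ddef: "d = n div m"
begin

lemma m_pos: "m > 0" using cop mdef by (simp add: coprime_commute)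
lemma rm: "[r ^ m = 1] (mod k)" using ord_works mdef by blast
lemma n_eq: "n = m * d" using mdvd ddef by simp
lemma d_pos: "d > 0" using n_eq n0 by (metis gr0I mult_0_right)

lemma nec:
  assumes E: "ext_power_fun k (\<lambda>x. x * r mod k) (\<lambda>_. 1) m n PP"
  shows "\<exists>s t. 0 \<le> s \<and> s < int d \<and> 0 \<le> t \<and> t < int d \<and> coprime t (int d) \<and>
     [t ^ (r - 1) = 1] (mod int d) \<and> [s * gs t k = 0] (mod int d) \<and>
     [s * gs (gs t r) m = t - 1] (mod int d) \<and>
     (\<forall>x<k. PP x = nat ((1 + int m * (s * gs t x)) mod int n))"
proof -
  have k0: "k > 0" using k1 by simp
  have Pm: "\<And>z. z < k \<Longrightarrow> [PP z = 1] (mod m)" using E unfolding ext_power_fun_def by simp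
  have Plt: "\<And>z. z < k \<Longrightarrow> PP z < n" using E unfolding ext_power_fun_def by simp
  have P0: "[PP 0 = 1] (mod (m * d))" using E n_eq unfolding ext_power_fun_def by simp
  have Rel: "\<And>x y. x < k \<Longrightarrow> y < k \<Longrightarrow>
     [PP ((x + y) mod k) = (\<Sum>i=1..PP x. PP (((\<lambda>x. x * r mod k) ^^ (i - 1)) y))] (mod (m * d))"
    using E n_eq unfolding ext_power_fun_def by simp
  define \<sigma> where "\<sigma> z = (int (PP z) - 1) div int m" for z
  define T where "T y = 1 + (\<Sum>i<m. \<sigma> (y * r ^ i mod k))" for y
  have Pz: "\<And>z. z < k \<Longrightarrow> int (PP z) = 1 + int m * \<sigma> z"
    unfolding \<sigma>_def using Pm Pz_lemma by blast
  have R1: "\<And>x y. x < k \<Longrightarrow> y < k \<Longrightarrow> [\<sigma> ((x + y) mod k) = \<sigma> y + \<sigma> x * T y] (mod int d)"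
  proof -
    fix x y assume xy: "x < k" "y < k"
    show "[\<sigma> ((x + y) mod k) = \<sigma> y + \<sigma> x * T y] (mod int d)"
      using key[of k m r PP x y d, OF k0 m_pos rm Pm xy] Rel[OF xy] unfolding \<sigma>_def T_def by blast
  qed
  have s0: "[\<sigma> 0 = 0] (mod int d)"
    using cong_nat_int_pm[OF m_pos Pz[OF k0], of 1 0 d] P0 by simp
  have Tinv1: "T (y * r mod k) = T y" if "y < k" for y
  proof -
    define h where "h i = \<sigma> (y * r ^ i mod k)" for i
    have "[y * r ^ m = y * 1] (mod k)" by (rule cong_mult[OF cong_refl rm])
    then have "h m = h 0" using that by (simp add: h_def cong_def)
    have e1: "(\<Sum>i<Suc m. h i) = h 0 + (\<Sum>i<m. h (Suc i))" by (rule sum.lessThan_Suc_shift)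
    have e2: "(\<Sum>i<Suc m. h i) = (\<Sum>i<m. h i) + h m" by simp
    have "(\<Sum>i<m. h (Suc i)) = (\<Sum>i<m. h i)" using e1 e2 \<open>h m = h 0\<close> by simp
    moreover have "\<And>i. (y * r mod k) * r ^ i mod k = y * r ^ Suc i mod k"
      by (simp add: mod_mult_left_eq mult.assoc)
    ultimately show ?thesis unfolding T_def h_def by simp
  qed
  have Tinv: "T (y * r ^ i mod k) = T y" if "y < k" for y i
  proof (induction i)
    case 0 then show ?case using that by simp
  next
    case (Suc i)
    have "y * r ^ Suc i mod k = (y * r ^ i mod k) * r mod k"
      by (simp add: mod_mult_left_eq mult.assoc mult.commute[of r])
    then show ?case using Tinv1[of "y * r ^ i mod k"] k0 Suc by simp
  qed
  have sumlem: "(\<Sum>i<m. a i + b i * c) = (\<Sum>i<m. a i) + (\<Sum>i<m. b i) * c" for a b :: "nat \<Rightarrow> int" and c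
    by (simp add: sum.distrib sum_distrib_right)
  have Thom: "[T ((x + y) mod k) = T x * T y] (mod int d)" if "x < k" "y < k" for x y
  proof -
    have a: "((x + y) mod k) * r ^ i mod k = ((x * r ^ i mod k) + (y * r ^ i mod k)) mod k" for i
      by (simp add: mod_add_eq mod_mult_left_eq distrib_right)
    have b: "[\<sigma> (((x + y) mod k) * r ^ i mod k) = \<sigma> (y * r ^ i mod k) + \<sigma> (x * r ^ i mod k) * T y] (mod int d)" for i
      using R1[of "x * r ^ i mod k" "y * r ^ i mod k"] Tinv[OF that(2), of i] k0 a by simp
    have "[(\<Sum>i<m. \<sigma> (((x + y) mod k) * r ^ i mod k)) =
           (\<Sum>i<m. \<sigma> (y * r ^ i mod k) + \<sigma> (x * r ^ i mod k) * T y)] (mod int d)"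
      by (intro cong_sum b)
    then have "[T ((x + y) mod k) = 1 + (\<Sum>i<m. \<sigma> (y * r ^ i mod k) + \<sigma> (x * r ^ i mod k) * T y)] (mod int d)"
      unfolding T_def[of "(x + y) mod k"] by (intro cong_add cong_refl)
    also have "1 + (\<Sum>i<m. \<sigma> (y * r ^ i mod k) + \<sigma> (x * r ^ i mod k) * T y) = T x * T y"
      unfolding sumlem by (simp add: T_def[of x] T_def[of y] algebra_simps)
    finally show ?thesis .
  qed
  have T0: "[T 0 = 1] (mod int d)"
  proof -
    have "[(\<Sum>i<m. \<sigma> (0 * r ^ i mod k)) = (\<Sum>i<m. 0)] (mod int d)" using s0 by (intro cong_sum) simp
    then show ?thesis unfolding T_def using cong_add[OF cong_refl[of 1]] by fastforce
  qed
  define t0 where "t0 = T (1 mod k)"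
  have Tpow: "x < k \<Longrightarrow> [T x = t0 ^ x] (mod int d)" for x
  proof (induction x)
    case 0 then show ?case using T0 by simp
  next
    case (Suc x)
    then have "k > 1" by simp
    then have e: "(x + 1 mod k) mod k = Suc x" using Suc by simp
    have "[T (Suc x) = T x * t0] (mod int d)" using Thom[of x "1 mod k"] Suc k0 e unfolding t0_def by simp
    also have "[T x * t0 = t0 ^ x * t0] (mod int d)" using Suc by (intro cong_mult cong_refl) simp
    finally show ?case by (simp add: mult.commute)
  qed
  have ekm: "((k - 1) + 1 mod k) mod k = 0"
    using k1 by (cases "k = 1") auto
  have tk: "[t0 ^ k = 1] (mod int d)"
  proof -
    have "[T 0 = T (k - 1) * t0] (mod int d)" using Thom[of "k - 1" "1 mod k"] k0 ekm unfolding t0_def by simp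
    also have "[T (k - 1) * t0 = t0 ^ (k - 1) * t0] (mod int d)" using Tpow[of "k - 1"] k0 by (intro cong_mult cong_refl) simp
    also have "t0 ^ (k - 1) * t0 = t0 ^ k" using k1 by (metis Suc_diff_1 k0 power_Suc2)
    finally show ?thesis using T0 by (meson cong_sym cong_trans)
  qed
  have cop0: "coprime t0 (int d)"
  proof -
    have "coprime (t0 ^ k) (int d)" using cong_imp_coprime[OF cong_sym[OF tk]] by simp
    then show ?thesis using k1 by simp
  qed
  have ta: "[t0 ^ r = t0] (mod int d)"
  proof (cases "r = 1")
    case True then show ?thesis by simp
  next
    case False
    then have "r < k" using rk by simp
    have "T ((1 mod k) * r ^ 1 mod k) = t0" using Tinv[of "1 mod k" 1] k0 unfolding t0_def by simp
    moreover have "(1 mod k) * r ^ 1 mod k = r" using \<open>r < k\<close> by (simp add: mod_mult_left_eq)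
    ultimately show ?thesis using Tpow[OF \<open>r < k\<close>] by (simp add: cong_sym)
  qed
  have ta': "[t0 ^ (r - 1) = 1] (mod int d)"
  proof -
    have "t0 * t0 ^ (r - 1) = t0 ^ r" using r1 by (metis Suc_diff_1 less_le_trans power_Suc zero_less_one)
    then have "[t0 * t0 ^ (r - 1) = t0 * 1] (mod int d)" using ta by simp
    then show ?thesis using cong_mult_lcancel[OF cop0] by blast
  qed
  define s0 where "s0 = \<sigma> (1 mod k)"
  have Sig: "x < k \<Longrightarrow> [\<sigma> x = s0 * gs t0 x] (mod int d)" for x
  proof (induction x)
    case 0 then show ?case using s0 by simp
  next
    case (Suc x)
    then have "k > 1" by simp
    then have e: "(x + 1 mod k) mod k = Suc x" using Suc by simp
    have "[\<sigma> (Suc x) = s0 + \<sigma> x * t0] (mod int d)" using R1[of x "1 mod k"] Suc k0 e unfolding t0_def s0_def by simp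
    also have "[s0 + \<sigma> x * t0 = s0 + s0 * gs t0 x * t0] (mod int d)" using Suc by (intro cong_mult cong_add cong_refl) simp
    also have "s0 + s0 * gs t0 x * t0 = s0 * gs t0 (Suc x)" by (simp add: gs_Suc algebra_simps)
    finally show ?case .
  qed
  have tb: "[s0 * gs t0 k = 0] (mod int d)"
  proof -
    have "[\<sigma> 0 = s0 + \<sigma> (k - 1) * t0] (mod int d)" using R1[of "k - 1" "1 mod k"] k0 ekm unfolding t0_def s0_def by simp
    also have "[s0 + \<sigma> (k - 1) * t0 = s0 + s0 * gs t0 (k - 1) * t0] (mod int d)"
      using Sig[of "k - 1"] k0 by (intro cong_mult cong_add cong_refl) simp
    also have "s0 + s0 * gs t0 (k - 1) * t0 = s0 * gs t0 k"
      using gs_Suc[of t0 "k - 1"] k0 by (simp add: algebra_simps)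
    finally show ?thesis using s0 by (meson cong_sym cong_trans)
  qed
  have tc: "[s0 * gs (gs t0 r) m = t0 - 1] (mod int d)"
  proof -
    have "t0 - 1 = (\<Sum>i<m. \<sigma> (r ^ i mod k))" unfolding t0_def T_def by (simp add: mod_mult_left_eq)
    moreover have "[\<sigma> (r ^ i mod k) = s0 * gs t0 r ^ i] (mod int d)" for i
    proof -
      have "[\<sigma> (r ^ i mod k) = s0 * gs t0 (r ^ i mod k)] (mod int d)" using Sig k0 by simp
      also have "[s0 * gs t0 (r ^ i mod k) = s0 * gs t0 (r ^ i)] (mod int d)" by (rule gs_mod_k[OF tb])
      also have "[s0 * gs t0 (r ^ i) = s0 * gs t0 r ^ i] (mod int d)" by (intro cong_mult cong_refl gs_r_pow2 ta)
      finally show ?thesis .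
    qed
    then have "[(\<Sum>i<m. \<sigma> (r ^ i mod k)) = (\<Sum>i<m. s0 * gs t0 r ^ i)] (mod int d)" by (intro cong_sum)
    moreover have "(\<Sum>i<m. s0 * gs t0 r ^ i) = s0 * gs (gs t0 r) m" by (simp add: gs_def sum_distrib_left)
    ultimately show ?thesis by (simp add: cong_sym)
  qed
  define s where "s = s0 mod int d"
  define t where "t = t0 mod int d"
  have ss: "[s0 = s] (mod int d)" and tt: "[t0 = t] (mod int d)" by (simp_all add: s_def t_def cong_sym)
  note tr = conds_transfer[OF ss tt cop0 ta' tb tc]
  have PPf: "\<forall>x<k. PP x = nat ((1 + int m * (s * gs t x)) mod int n)"
  proof (intro allI impI)
    fix x assume "x < k"
    have "[\<sigma> x = s * gs t x] (mod int d)"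
      using Sig[OF \<open>x < k\<close>] cong_mult[OF ss gs_cong[OF tt]] by (meson cong_trans)
    then show "PP x = nat ((1 + int m * (s * gs t x)) mod int n)"
      using P_as_Pi[OF m_pos n_eq n0 Pz[OF \<open>x < k\<close>] Plt[OF \<open>x < k\<close>]] by blast
  qed
  have "0 \<le> s \<and> s < int d \<and> 0 \<le> t \<and> t < int d" using d_pos by (simp add: s_def t_def)
  then show ?thesis using tr PPf by blast
qed

lemma suf:
  assumes ta: "[t ^ (r - 1) = 1] (mod int d)" and tb: "[s * gs t k = 0] (mod int d)"
    and tc: "[s * gs (gs t r) m = t - 1] (mod int d)"
    and PPx: "\<forall>x<k. PP x = nat ((1 + int m * (s * gs t x)) mod int n)"
  shows "ext_power_fun k (\<lambda>x. x * r mod k) (\<lambda>_. 1) m n PP"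
proof -
  have k0: "k > 0" using k1 by simp
  define \<sigma> where "\<sigma> z = (int (PP z) - 1) div int m" for z
  define T where "T y = 1 + (\<Sum>i<m. \<sigma> (y * r ^ i mod k))" for y
  have Ps: "int (PP z) = 1 + int m * \<sigma> z" "[\<sigma> z = s * gs t z] (mod int d)" "[PP z = 1] (mod m)"
    if "z < k" for z
    using Pi_sigma[OF m_pos n_eq n0, of "s * gs t z"] PPx that unfolding \<sigma>_def by auto
  have Plt: "PP z < n" if "z < k" for z
    using PPx that n0 by (simp add: nat_less_iff)
  have P0: "[PP 0 = 1] (mod (m * d))"
    using cong_nat_int_pm[OF m_pos Ps(1)[OF k0], of 1 0 d] Ps(2)[OF k0] by simp
  have tr: "[t ^ r = t] (mod int d)"
  proof -
    have "t ^ r = t * t ^ (r - 1)" using r1 by (metis Suc_diff_1 less_le_trans power_Suc zero_less_one)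
    moreover have "[t * t ^ (r - 1) = t * 1] (mod int d)" using ta by (intro cong_mult cong_refl)
    ultimately show ?thesis by simp
  qed
  have TT: "[T y = t ^ y] (mod int d)" if "y < k" for y
  proof -
    have c1: "[\<sigma> (y * r ^ i mod k) = s * gs t r ^ i * gs t y] (mod int d)" for i
    proof -
      have "[\<sigma> (y * r ^ i mod k) = s * gs t (y * r ^ i mod k)] (mod int d)" using Ps(2) k0 by simp
      also have "[s * gs t (y * r ^ i mod k) = s * gs t (r ^ i * y)] (mod int d)"
        using gs_mod_k[OF tb, of "y * r ^ i"] by (simp add: mult.commute)
      also have "[s * gs t (r ^ i * y) = s * (gs t (r ^ i) * gs t y)] (mod int d)"
        by (intro cong_mult cong_refl gs_r_pow tr)
      also have "[s * (gs t (r ^ i) * gs t y) = s * (gs t r ^ i * gs t y)] (mod int d)"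
        by (intro cong_mult cong_refl gs_r_pow2 tr)
      finally show ?thesis by (simp add: mult.assoc)
    qed
    have "[(\<Sum>i<m. \<sigma> (y * r ^ i mod k)) = (\<Sum>i<m. s * gs t r ^ i * gs t y)] (mod int d)"
      by (intro cong_sum c1)
    moreover have "(\<Sum>i<m. s * gs t r ^ i * gs t y) = (s * gs (gs t r) m) * gs t y"
      by (simp add: sum_distrib_right[symmetric] gs_def[of "gs t r" m] sum_distrib_left)
    moreover have "[(s * gs (gs t r) m) * gs t y = (t - 1) * gs t y] (mod int d)"
      by (intro cong_mult cong_refl tc)
    ultimately have "[(\<Sum>i<m. \<sigma> (y * r ^ i mod k)) = t ^ y - 1] (mod int d)"
      unfolding gs_geom by (metis cong_trans)
    then have "[1 + (\<Sum>i<m. \<sigma> (y * r ^ i mod k)) = 1 + (t ^ y - 1)] (mod int d)"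
      by (intro cong_add cong_refl)
    then show ?thesis unfolding T_def by simp
  qed
  have R: "[\<sigma> ((x + y) mod k) = \<sigma> y + \<sigma> x * T y] (mod int d)" if "x < k" "y < k" for x y
  proof -
    have "[\<sigma> ((x + y) mod k) = s * gs t ((y + x) mod k)] (mod int d)" using Ps(2) k0 by (simp add: add.commute)
    also have "[s * gs t ((y + x) mod k) = s * gs t (y + x)] (mod int d)" by (rule gs_mod_k[OF tb])
    also have "s * gs t (y + x) = s * gs t y + s * gs t x * t ^ y" unfolding gs_add by (simp add: algebra_simps)
    also have "[s * gs t y + s * gs t x * t ^ y = \<sigma> y + \<sigma> x * T y] (mod int d)"
      using Ps(2)[OF that(1)] Ps(2)[OF that(2)] TT[OF that(2)]
      by (intro cong_add cong_mult) (simp_all add: cong_sym)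
    finally show ?thesis .
  qed
  have Rel: "[PP ((x + y) mod k) = (\<Sum>i=1..PP x. PP (((\<lambda>x. x * r mod k) ^^ (i - 1)) y))] (mod (m * d))"
    if xy: "x < k" "y < k" for x y
    using key[of k m r PP x y d, OF k0 m_pos rm Ps(3) xy] R[OF xy] unfolding \<sigma>_def T_def by blast
  show ?thesis unfolding ext_power_fun_def using Plt Ps(3) P0 Rel n_eq by simp
qed

lemma part2:
  assumes tb: "[s * gs t k = 0] (mod int d)" and tc: "[s * gs (gs t r) m = t - 1] (mod int d)"
    and tb': "[s' * gs t' k = 0] (mod int d)" and tc': "[s' * gs (gs t' r) m = t' - 1] (mod int d)"
  shows "(\<forall>x<k. nat ((1 + int m * (s * gs t x)) mod int n) = nat ((1 + int m * (s' * gs t' x)) mod int n))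
     \<longleftrightarrow> [s = s'] (mod int d) \<and> [s * (t - t') = 0] (mod int d)"
proof -
  have "(\<forall>x<k. nat ((1 + int m * (s * gs t x)) mod int n) = nat ((1 + int m * (s' * gs t' x)) mod int n))
     \<longleftrightarrow> (\<forall>x<k. [s * gs t x = s' * gs t' x] (mod int d))"
    using Pi_eq_iff[OF m_pos n_eq n0] by blast
  also have "\<dots> \<longleftrightarrow> [s = s'] (mod int d) \<and> [s * (t - t') = 0] (mod int d)"
  proof
    assume A: "\<forall>x<k. [s * gs t x = s' * gs t' x] (mod int d)"
    have gs1: "gs u 1 = 1" for u by (simp add: gs_def)
    have ss: "[s = s'] (mod int d)"
    proof (cases "k = 1")
      case True
      then have "[s = 0] (mod int d)" "[s' = 0] (mod int d)" using tb tb' gs1 by simp_all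
      then show ?thesis by (meson cong_sym cong_trans)
    next
      case False
      then show ?thesis using A[rule_format, of 1] k1 gs1 by simp
    qed
    then have d1: "int d dvd s - s'" by (simp add: cong_iff_dvd_diff)
    have "int d dvd s * (t - t')"
    proof (cases "k \<ge> 3")
      case True
      have gs2: "gs u 2 = 1 + u" for u by (simp add: gs_def numeral_2_eq_2)
      have "int d dvd (s + s * t) - (s' + s' * t')"
        using A[rule_format, of 2] True gs2 by (simp add: cong_iff_dvd_diff algebra_simps)
      moreover have "s * (t - t') = ((s + s * t) - (s' + s' * t')) - (s - s') + (s' - s) * t'"
        by (simp add: algebra_simps)
      moreover have "int d dvd (s' - s) * t'" using d1 by (simp add: dvd_diff_commute)
      ultimately show ?thesis using d1 by (metis dvd_add dvd_diff)
    next
      case False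
      then have "r = 1" using rk r1 by auto
      then have "m = 1" using mdef by simp
      then have "int d dvd (t - 1) - s" "int d dvd (t' - 1) - s'"
        using tc tc' \<open>r = 1\<close> gs1 by (simp_all add: cong_iff_dvd_diff dvd_diff_commute)
      moreover have "s * (t - t') = s * ((t - 1) - s) - s * ((t' - 1) - s') + s * (s - s')"
        by (simp add: algebra_simps)
      ultimately show ?thesis using d1 by (metis dvd_add dvd_diff dvd_mult)
    qed
    then show "[s = s'] (mod int d) \<and> [s * (t - t') = 0] (mod int d)"
      using ss by (simp add: cong_iff_dvd_diff)
  next
    assume B: "[s = s'] (mod int d) \<and> [s * (t - t') = 0] (mod int d)"
    have stt: "[s * t = s * t'] (mod int d)" using B by (simp add: cong_iff_dvd_diff algebra_simps)
    have pw: "[s * t ^ j = s * t' ^ j] (mod int d)" for j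
    proof (induction j)
      case 0 then show ?case by simp
    next
      case (Suc j)
      have "s * t ^ Suc j = (s * t ^ j) * t" by (simp add: algebra_simps)
      also have "[(s * t ^ j) * t = (s * t' ^ j) * t] (mod int d)" by (rule cong_mult[OF Suc.IH cong_refl])
      also have "(s * t' ^ j) * t = t' ^ j * (s * t)" by (simp add: algebra_simps)
      also have "[t' ^ j * (s * t) = t' ^ j * (s * t')] (mod int d)" by (rule cong_mult[OF cong_refl stt])
      also have "t' ^ j * (s * t') = s * t' ^ Suc j" by (simp add: algebra_simps)
      finally show ?case .
    qed
    show "\<forall>x<k. [s * gs t x = s' * gs t' x] (mod int d)"
    proof (intro allI impI)
      fix x
      have "s * gs t x = (\<Sum>i<x. s * t ^ i)" by (simp add: gs_def sum_distrib_left)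
      also have "[\<dots> = (\<Sum>i<x. s * t' ^ i)] (mod int d)" by (intro cong_sum pw)
      also have "(\<Sum>i<x. s * t' ^ i) = s * gs t' x" by (simp add: gs_def sum_distrib_left)
      also have "[s * gs t' x = s' * gs t' x] (mod int d)" using B by (intro cong_mult cong_refl) simp
      finally show "[s * gs t x = s' * gs t' x] (mod int d)" .
    qed
  qed
  finally show ?thesis .
qed

end


theorem lemma5p2:
  fixes k r n :: nat
  assumes "k \<ge> 1" and "1 \<le> r" and "r < k \<or> r = 1" and "coprime r k"
    and "n > 0" and "ord k r dvd n"
  shows "(\<forall>PP. ext_power_fun k (\<lambda>x. x * r mod k) (\<lambda>_. 1) (ord k r) n PP \<longleftrightarrow>
            (\<exists>s t. admissible_st k r n s t \<and> (\<forall>x<k. PP x = Pi_rst k r n s t x)))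
       \<and> (\<forall>s t s' t'. admissible_st k r n s t \<longrightarrow> admissible_st k r n s' t' \<longrightarrow>
            ((\<forall>x<k. Pi_rst k r n s t x = Pi_rst k r n s' t' x) \<longleftrightarrow>
              [s = s'] (mod int (n div ord k r)) \<and>
              [s * (t - t') = 0] (mod int (n div ord k r))))"
proof -
  note ctx = assms(1-5) refl assms(6) refl
  have PiE: "\<And>s t x. Pi_rst k r n s t x = nat ((1 + int (ord k r) * (s * gs t x)) mod int n)"
    unfolding Pi_rst_def gs_alt by (simp add: mult.assoc)
  have admE: "\<And>s t. admissible_st k r n s t \<longleftrightarrow>
     0 \<le> s \<and> s < int (n div ord k r) \<and> 0 \<le> t \<and> t < int (n div ord k r) \<and> coprime t (int (n div ord k r)) \<and>
     [t ^ (r - 1) = 1] (mod int (n div ord k r)) \<and> [s * gs t k = 0] (mod int (n div ord k r)) \<and>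
     [s * gs (gs t r) (ord k r) = t - 1] (mod int (n div ord k r))"
    unfolding admissible_st_def Let_def gs_alt by simp
  show ?thesis
  proof (intro conjI allI impI)
    fix PP
    show "ext_power_fun k (\<lambda>x. x * r mod k) (\<lambda>_. 1) (ord k r) n PP \<longleftrightarrow>
            (\<exists>s t. admissible_st k r n s t \<and> (\<forall>x<k. PP x = Pi_rst k r n s t x))"
    proof
      assume "ext_power_fun k (\<lambda>x. x * r mod k) (\<lambda>_. 1) (ord k r) n PP"
      from nec[OF ctx this] show "\<exists>s t. admissible_st k r n s t \<and> (\<forall>x<k. PP x = Pi_rst k r n s t x)"
        unfolding admE PiE by blast
    next
      assume "\<exists>s t. admissible_st k r n s t \<and> (\<forall>x<k. PP x = Pi_rst k r n s t x)"
      then obtain s t where "admissible_st k r n s t" "\<forall>x<k. PP x = Pi_rst k r n s t x" by blast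
      then show "ext_power_fun k (\<lambda>x. x * r mod k) (\<lambda>_. 1) (ord k r) n PP"
        unfolding admE PiE using suf[OF ctx] by blast
    qed
  next
    fix s t s' t'
    assume "admissible_st k r n s t" "admissible_st k r n s' t'"
    then show "(\<forall>x<k. Pi_rst k r n s t x = Pi_rst k r n s' t' x) \<longleftrightarrow>
              [s = s'] (mod int (n div ord k r)) \<and> [s * (t - t') = 0] (mod int (n div ord k r))"
      unfolding admE PiE using part2[OF ctx] by blast
  qed
qed


end
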